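(* Assume $\ker(K)\cap\ker(D)=\{0\}$ and fix $\delta\ge0$ and data $y^\delta$. Let $\{\Psi_k\}_{k\in\mathbb{N}}$ be a sequence of reconstructors and $\Psi^*$ a reconstructor such that $\sup_{y\in\mathcal{Y}^\delta}\|\Psi_k(y)-\Psi^*(y)\|_1\to0$ as $k\to\infty$, where $\mathcal{Y}^\delta=\{y\in\mathbb{R}^m:\inf_{x\in\mathcal{X}}\|Kx-y\|_2\le\delta\}$. For each $k$ let $x^*_{\Psi_k,\delta}$ be the unique minimizer over $\mathcal{X}$ of $\mathcal{J}_{\Psi_k,\delta}(x)=\|Kx-y^\delta\|_2^2+\lambda\|w(\Psi_k(y^\delta))\odot|Dx|\|_1$, and let $x^*_{\Psi^*,\delta}$ denote the unique minimizer over $\mathcal{X}$ of $\mathcal{J}_{\Psi^*,\delta}(x)=\|Kx-y^\delta\|_2^2+\lambda\|w(\Psi^*(y^\delta))\odot|Dx|\|_1$. Then $\{x^*_{\Psi_k,\delta}\}_{k\in\mathbb{N}}$ has a convergent subsequence whose limit is $x^*_{\Psi^*,\delta}$.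
   Context: Let $K\in\mathbb{R}^{m\times n}$ with $m\le n$, and let $D_h,D_v\in\mathbb{R}^{n\times n}$ be the discrete horizontal and vertical difference operators; $Dx=\begin{bmatrix}D_hx\\ D_vx\end{bmatrix}\in\mathbb{R}^{2n}$, and $|Dx|\in\mathbb{R}^n$, $(|Dx|)_i=\sqrt{(D_hx)_i^2+(D_vx)_i^2}$. $\mathcal{X}=\{x\in\mathbb{R}^n: x_i\ge 0\ \forall i\}$. Fix $\lambda>0$, $\eta>0$, $p\in(0,1)$, and for $\tilde x\in\mathbb{R}^n$ define $(w(\tilde{x}))_i=\big(\eta/\sqrt{\eta^2+(|D\tilde{x}|)_i^2}\big)^{1-p}$. A reconstructor is a Lipschitz continuous map $\Psi:\mathbb{R}^m\to\mathbb{R}^n$. The data is $y^\delta=Kx^{GT}+e$ with $x^{GT}\in\mathcal{X}$ and $\|e\|_2\le\delta$. $\odot$ is the entrywise product. *)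

theory Defs
  imports "HOL-Analysis.Analysis"
begin

definition l1norm :: "real ^ 'n \<Rightarrow> real" where
  "l1norm x = (\<Sum>i\<in>UNIV. \<bar>x $ i\<bar>)"

definition nonneg_set :: "(real ^ 'n) set" where
  "nonneg_set = {x. \<forall>i. x $ i \<ge> 0}"

definition grad_mag :: "real ^ 'n ^ 'n \<Rightarrow> real ^ 'n ^ 'n \<Rightarrow> real ^ 'n \<Rightarrow> real ^ 'n" where
  "grad_mag Dh Dv x = (\<chi> i. sqrt (((Dh *v x) $ i)\<^sup>2 + ((Dv *v x) $ i)\<^sup>2))"

definition weight :: "real \<Rightarrow> real \<Rightarrow> real ^ 'n ^ 'n \<Rightarrow> real ^ 'n ^ 'n \<Rightarrow> real ^ 'n \<Rightarrow> real ^ 'n" where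
  "weight \<eta> p Dh Dv xt =
     (\<chi> i. (\<eta> / sqrt (\<eta>\<^sup>2 + ((grad_mag Dh Dv xt) $ i)\<^sup>2)) powr (1 - p))"

definition reconstructor :: "(real ^ 'm \<Rightarrow> real ^ 'n) \<Rightarrow> bool" where
  "reconstructor \<Psi> \<longleftrightarrow> (\<exists>L. L-lipschitz_on UNIV \<Psi>)"

definition J_fun :: "real ^ 'n ^ 'm \<Rightarrow> real ^ 'n ^ 'n \<Rightarrow> real ^ 'n ^ 'n \<Rightarrow> real \<Rightarrow> real \<Rightarrow> real
    \<Rightarrow> (real ^ 'm \<Rightarrow> real ^ 'n) \<Rightarrow> real ^ 'm \<Rightarrow> real ^ 'n \<Rightarrow> real" where
  "J_fun K Dh Dv lam \<eta> p \<Psi> y x =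
     (norm (K *v x - y))\<^sup>2 + lam * l1norm (weight \<eta> p Dh Dv (\<Psi> y) * grad_mag Dh Dv x)"

definition Y_set :: "real ^ 'n ^ 'm \<Rightarrow> real \<Rightarrow> (real ^ 'm) set" where
  "Y_set K \<delta> = {y. (INF x\<in>nonneg_set. norm (K *v x - y)) \<le> \<delta>}"

definition is_min_on :: "('a \<Rightarrow> real) \<Rightarrow> 'a set \<Rightarrow> 'a \<Rightarrow> bool" where
  "is_min_on f S x \<longleftrightarrow> x \<in> S \<and> (\<forall>z\<in>S. f x \<le> f z)"

end

theory Submission imports Defs begin

lemma mv_tendsto:
  fixes A :: "real ^ 'n ^ 'm"
  assumes "(f \<longlongrightarrow> a) F"
  shows "((\<lambda>k. A *v f k) \<longlongrightarrow> A *v a) F"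
  using bounded_linear.tendsto[OF matrix_vector_mul_bounded_linear assms] .

lemma gm_tendsto:
  assumes "(f \<longlongrightarrow> a) F"
  shows "((\<lambda>k. grad_mag Dh Dv (f k)) \<longlongrightarrow> grad_mag Dh Dv a) F"
  unfolding grad_mag_def
  by (intro tendsto_vec_lambda tendsto_intros mv_tendsto assms)

lemma weight_tendsto:
  assumes "(f \<longlongrightarrow> a) F" "\<eta> > 0"
  shows "((\<lambda>k. weight \<eta> p Dh Dv (f k)) \<longlongrightarrow> weight \<eta> p Dh Dv a) F"
  unfolding weight_def
proof (intro tendsto_vec_lambda tendsto_powr tendsto_const tendsto_divide tendsto_real_sqrt tendsto_add tendsto_power)
  fix i
  show "((\<lambda>k. grad_mag Dh Dv (f k) $ i) \<longlongrightarrow> grad_mag Dh Dv a $ i) F"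
    by (intro tendsto_vec_nth gm_tendsto assms)
  have sp: "sqrt (\<eta>\<^sup>2 + (grad_mag Dh Dv a $ i)\<^sup>2) > 0" using assms(2) by (simp add: add_pos_nonneg)
  from sp show "sqrt (\<eta>\<^sup>2 + (grad_mag Dh Dv a $ i)\<^sup>2) \<noteq> 0" using assms(2) by simp
  show "\<eta> / sqrt (\<eta>\<^sup>2 + (grad_mag Dh Dv a $ i)\<^sup>2) \<noteq> 0" using assms(2) sp by simp
qed

lemma weight_pos:
  assumes "\<eta> > 0" shows "weight \<eta> p Dh Dv x $ i > 0"
proof -
  have "sqrt (\<eta>\<^sup>2 + (grad_mag Dh Dv x $ i)\<^sup>2) > 0" using assms by (simp add: add_pos_nonneg)
  then show ?thesis unfolding weight_def using assms by simp
qed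

lemma vmult_tendsto:
  fixes f g :: "'a \<Rightarrow> real ^ 'n"
  assumes "(f \<longlongrightarrow> a) F" "(g \<longlongrightarrow> b) F"
  shows "((\<lambda>k. f k * g k) \<longlongrightarrow> a * b) F"
proof -
  have e: "f k * g k = (\<chi> i. f k $ i * g k $ i)" for k by (simp add: vec_eq_iff)
  have e2: "a * b = (\<chi> i. a $ i * b $ i)" by (simp add: vec_eq_iff)
  show ?thesis unfolding e e2
    by (intro tendsto_vec_lambda tendsto_mult tendsto_vec_nth assms)
qed

lemma l1_tendsto:
  assumes "(f \<longlongrightarrow> a) F"
  shows "((\<lambda>k. l1norm (f k)) \<longlongrightarrow> l1norm a) F"
  unfolding l1norm_def
  by (intro tendsto_sum tendsto_rabs tendsto_vec_nth assms)

lemma gm_nonneg: "grad_mag Dh Dv x $ i \<ge> 0"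
  unfolding grad_mag_def by simp

lemma gm_zero: "grad_mag Dh Dv 0 = 0"
  unfolding grad_mag_def by (simp add: vec_eq_iff)

lemma pos_seq_lower:
  fixes f :: "nat \<Rightarrow> real"
  assumes "\<And>k. f k > 0" "f \<longlonglongrightarrow> L" "L > 0"
  shows "\<exists>c>0. \<forall>k. c \<le> f k"
proof -
  have "eventually (\<lambda>k. f k > L/2) sequentially"
    using order_tendstoD(1)[OF assms(2), of "L/2"] assms(3) by simp
  then obtain N where N: "\<And>k. k \<ge> N \<Longrightarrow> f k > L/2" by (auto simp: eventually_sequentially)
  define c where "c = Min (insert (L/2) (f ` {..<N}))"
  have "c > 0" unfolding c_def using assms by (subst Min_gr_iff) auto
  moreover have "c \<le> f k" for k
  proof (cases "k < N")
    case True then show ?thesis unfolding c_def by (intro Min_le) auto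
  next
    case False then have "c \<le> L/2" unfolding c_def by (intro Min_le) auto
    with N[of k] False show ?thesis by simp
  qed
  ultimately show ?thesis by blast
qed

lemma lin_lower:
  fixes K :: "real ^ 'n ^ 'm" and Dh Dv :: "real ^ 'n ^ 'n"
  assumes ker: "\<And>x. K *v x = 0 \<Longrightarrow> Dh *v x = 0 \<Longrightarrow> Dv *v x = 0 \<Longrightarrow> x = 0"
  shows "\<exists>B>0. \<forall>x. B * norm x \<le> norm (K *v x) + norm (Dh *v x) + norm (Dv *v x)"
proof -
  let ?f = "\<lambda>x. (K *v x, (Dh *v x, Dv *v x))"
  have lin: "linear ?f"
    by (intro bounded_linear.linear bounded_linear_Pair matrix_vector_mul_bounded_linear)
  have "inj ?f"
  proof (rule linear_injective_0[OF lin, THEN iffD2], intro allI impI)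
    fix x assume "?f x = 0" then show "x = 0" using ker by (simp add: zero_prod_def)
  qed
  then obtain B where B: "B > 0" "\<And>x. B * norm x \<le> norm (?f x)"
    using linear_inj_bounded_below_pos[OF lin] by blast
  have "norm (?f x) \<le> norm (K *v x) + norm (Dh *v x) + norm (Dv *v x)" for x
    using norm_Pair_le[of "K *v x" "(Dh *v x, Dv *v x)"] norm_Pair_le[of "Dh *v x" "Dv *v x"] by simp
  with B show ?thesis by (meson order_trans)
qed

theorem theorem4:
  fixes K :: "real ^ 'n ^ 'm" and Dh Dv :: "real ^ 'n ^ 'n"
    and lam \<eta> p \<delta> :: real and y\<delta> :: "real ^ 'm"
    and xGT :: "real ^ 'n" and e :: "real ^ 'm"
    and \<Psi> :: "nat \<Rightarrow> real ^ 'm \<Rightarrow> real ^ 'n" and \<Psi>s :: "real ^ 'm \<Rightarrow> real ^ 'n"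
    and xk :: "nat \<Rightarrow> real ^ 'n" and xs :: "real ^ 'n"
  assumes "CARD('m) \<le> CARD('n)"
    and "lam > 0" and "\<eta> > 0" and "0 < p" and "p < 1"
    and ker: "\<And>x. K *v x = 0 \<Longrightarrow> Dh *v x = 0 \<Longrightarrow> Dv *v x = 0 \<Longrightarrow> x = 0"
    and "\<delta> \<ge> 0"
    and "xGT \<in> nonneg_set" and "norm e \<le> \<delta>" and "y\<delta> = K *v xGT + e"
    and "\<And>k. reconstructor (\<Psi> k)" and "reconstructor \<Psi>s"
    and unif: "(\<lambda>k. SUP y\<in>Y_set K \<delta>. ereal (l1norm (\<Psi> k y - \<Psi>s y))) \<longlonglongrightarrow> 0"
    and xk_min: "\<And>k. is_min_on (J_fun K Dh Dv lam \<eta> p (\<Psi> k) y\<delta>) nonneg_set (xk k)"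
    and xk_uniq: "\<And>k z. is_min_on (J_fun K Dh Dv lam \<eta> p (\<Psi> k) y\<delta>) nonneg_set z \<Longrightarrow> z = xk k"
    and xs_min: "is_min_on (J_fun K Dh Dv lam \<eta> p \<Psi>s y\<delta>) nonneg_set xs"
    and xs_uniq: "\<And>z. is_min_on (J_fun K Dh Dv lam \<eta> p \<Psi>s y\<delta>) nonneg_set z \<Longrightarrow> z = xs"
  shows "\<exists>r. strict_mono r \<and> (xk \<circ> r) \<longlonglongrightarrow> xs"
proof -
  let ?g = "grad_mag Dh Dv"
  define W where "W k = weight \<eta> p Dh Dv (\<Psi> k y\<delta>)" for k
  define Ws where "Ws = weight \<eta> p Dh Dv (\<Psi>s y\<delta>)"
  define G where "G w x = (norm (K *v x - y\<delta>))\<^sup>2 + lam * l1norm (w * ?g x)" for w x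
  have Jk: "J_fun K Dh Dv lam \<eta> p (\<Psi> k) y\<delta> x = G (W k) x" for k x
    unfolding J_fun_def G_def W_def by simp
  have Js: "J_fun K Dh Dv lam \<eta> p \<Psi>s y\<delta> x = G Ws x" for x
    unfolding J_fun_def G_def Ws_def by simp
  have yin: "y\<delta> \<in> Y_set K \<delta>"
  proof -
    have "(INF x\<in>nonneg_set. norm (K *v x - y\<delta>)) \<le> norm (K *v xGT - y\<delta>)"
      by (rule cINF_lower) (use assms(8) in \<open>auto intro: bdd_belowI[where m=0]\<close>)
    also have "\<dots> = norm e" using assms(10) by (simp add: norm_minus_cancel)
    finally show ?thesis using assms(9) unfolding Y_set_def by simp
  qed
  have l1c: "(\<lambda>k. l1norm (\<Psi> k y\<delta> - \<Psi>s y\<delta>)) \<longlonglongrightarrow> 0"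
  proof -
    have "(\<lambda>k. ereal (l1norm (\<Psi> k y\<delta> - \<Psi>s y\<delta>))) \<longlonglongrightarrow> 0"
    proof (rule tendsto_sandwich[OF _ _ tendsto_const unif])
      show "\<forall>\<^sub>F k in sequentially. 0 \<le> ereal (l1norm (\<Psi> k y\<delta> - \<Psi>s y\<delta>))"
        by (simp add: l1norm_def sum_nonneg)
      show "\<forall>\<^sub>F k in sequentially. ereal (l1norm (\<Psi> k y\<delta> - \<Psi>s y\<delta>)) \<le> (SUP y\<in>Y_set K \<delta>. ereal (l1norm (\<Psi> k y - \<Psi>s y)))"
        using yin by (intro always_eventually allI SUP_upper2[OF yin]) simp
    qed
    then show ?thesis by (simp add: zero_ereal_def)
  qed
  have Pconv: "(\<lambda>k. \<Psi> k y\<delta>) \<longlonglongrightarrow> \<Psi>s y\<delta>"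
  proof -
    have "(\<lambda>k. norm (\<Psi> k y\<delta> - \<Psi>s y\<delta>)) \<longlonglongrightarrow> 0"
      by (rule tendsto_sandwich[OF _ _ tendsto_const l1c])
         (auto simp: l1norm_def intro!: always_eventually order_trans[OF norm_le_l1_cart])
    then show ?thesis using tendsto_norm_zero_iff LIM_zero_cancel by blast
  qed
  have Wconv: "W \<longlonglongrightarrow> Ws"
    unfolding W_def Ws_def by (rule weight_tendsto[OF Pconv assms(3)])
  have "\<forall>i. \<exists>c>0. \<forall>k. c \<le> W k $ i"
    using pos_seq_lower[OF _ tendsto_vec_nth[OF Wconv]] weight_pos[OF assms(3)]
    unfolding W_def Ws_def by blast
  then obtain cf where cf: "\<And>i. cf i > 0" "\<And>i k. cf i \<le> W k $ i" by metis
  define c where "c = Min (range cf)"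
  have c: "c > 0" "\<And>i k. c \<le> W k $ i"
  proof -
    show "c > 0" unfolding c_def using cf(1) by (subst Min_gr_iff) auto
    show "c \<le> W k $ i" for i k
    proof -
      have "c \<le> cf i" unfolding c_def by (rule Min_le) auto
      then show ?thesis using cf(2)[of i k] by linarith
    qed
  qed
  define M where "M = (norm y\<delta>)\<^sup>2 / (lam * c)"
  have Gbound: "G (W k) (xk k) \<le> (norm y\<delta>)\<^sup>2" for k
  proof -
    have "G (W k) (xk k) \<le> G (W k) 0"
      using xk_min[of k] unfolding is_min_on_def Jk
      by (auto simp: nonneg_set_def)
    also have "G (W k) 0 = (norm y\<delta>)\<^sup>2" unfolding G_def
      by (simp add: gm_zero l1norm_def)
    finally show ?thesis .
  qed
  have gb: "?g (xk k) $ i \<le> M" for k i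
  proof -
    have t: "W k $ i * ?g (xk k) $ i \<le> l1norm (W k * ?g (xk k))"
      unfolding l1norm_def
      using member_le_sum[of i UNIV "\<lambda>i. \<bar>(W k * ?g (xk k)) $ i\<bar>"] by simp
    have "lam * (W k $ i * ?g (xk k) $ i) \<le> (norm y\<delta>)\<^sup>2"
      using Gbound[of k] mult_left_mono[OF t, of lam] assms(2) unfolding G_def
      by (smt (verit) zero_le_power2)
    moreover have "lam * (c * ?g (xk k) $ i) \<le> lam * (W k $ i * ?g (xk k) $ i)"
      using c(2)[where i=i and k=k] gm_nonneg assms(2) by (intro mult_left_mono mult_right_mono) auto
    ultimately have "(lam * c) * ?g (xk k) $ i \<le> (norm y\<delta>)\<^sup>2" by (simp add: mult.assoc)
    then show ?thesis unfolding M_def using assms(2) c(1)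
      by (simp add: field_simps)
  qed
  have nK: "norm (K *v xk k) \<le> 2 * norm y\<delta>" for k
  proof -
    have "(norm (K *v xk k - y\<delta>))\<^sup>2 \<le> (norm y\<delta>)\<^sup>2"
      using Gbound[of k] assms(2) unfolding G_def
      by (smt (verit) l1norm_def mult_nonneg_nonneg sum_nonneg abs_ge_zero)
    then have "norm (K *v xk k - y\<delta>) \<le> norm y\<delta>" using power2_le_imp_le by simp
    then show ?thesis using norm_triangle_sub[of "K *v xk k" y\<delta>] by simp
  qed
  have gh: "\<bar>(Dh *v x) $ i\<bar> \<le> ?g x $ i" and gv: "\<bar>(Dv *v x) $ i\<bar> \<le> ?g x $ i" for x i
    by (simp_all add: grad_mag_def)
  have nD: "norm (Dh *v xk k) \<le> real CARD('n) * M" "norm (Dv *v xk k) \<le> real CARD('n) * M" for k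
  proof -
    have "norm (Dh *v xk k) \<le> (\<Sum>i\<in>UNIV. \<bar>(Dh *v xk k) $ i\<bar>)" by (rule norm_le_l1_cart)
    also have "\<dots> \<le> (\<Sum>i\<in>(UNIV::'n set). M)"
      using order_trans[OF gh gb] by (intro sum_mono) blast
    finally show "norm (Dh *v xk k) \<le> real CARD('n) * M" by simp
    have "norm (Dv *v xk k) \<le> (\<Sum>i\<in>UNIV. \<bar>(Dv *v xk k) $ i\<bar>)" by (rule norm_le_l1_cart)
    also have "\<dots> \<le> (\<Sum>i\<in>(UNIV::'n set). M)"
      using order_trans[OF gv gb] by (intro sum_mono) blast
    finally show "norm (Dv *v xk k) \<le> real CARD('n) * M" by simp
  qed
  obtain B where B: "B > 0" "\<And>x. B * norm x \<le> norm (K *v x) + norm (Dh *v x) + norm (Dv *v x)"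
    using lin_lower[OF ker] by blast
  have "norm (xk k) \<le> (2 * norm y\<delta> + 2 * (real CARD('n) * M)) / B" for k
    using B(2)[of "xk k"] nK[of k] nD[of k] B(1) by (simp add: field_simps)
  then have "bounded (range xk)" unfolding bounded_iff by blast
  then obtain l r where r: "strict_mono r" "(xk \<circ> r) \<longlonglongrightarrow> l"
    using bounded_imp_convergent_subsequence by blast
  have lnn: "l \<in> nonneg_set"
    unfolding nonneg_set_def
  proof (intro CollectI allI)
    fix i
    show "0 \<le> l $ i"
      using r(2) xk_min by (intro LIMSEQ_le_const[OF tendsto_vec_nth]) (auto simp: is_min_on_def nonneg_set_def)
  qed
  have Gcont: "((\<lambda>k. G (f k) (h k)) \<longlongrightarrow> G a b) sequentially"
    if "f \<longlonglongrightarrow> a" "h \<longlonglongrightarrow> b" for f h a b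
    unfolding G_def
    by (intro tendsto_intros l1_tendsto vmult_tendsto gm_tendsto mv_tendsto that)
  have Wr: "(W \<circ> r) \<longlonglongrightarrow> Ws" using LIMSEQ_subseq_LIMSEQ[OF Wconv r(1)] .
  have "G Ws l \<le> G Ws z" if z: "z \<in> nonneg_set" for z
  proof (rule LIMSEQ_le)
    show "(\<lambda>k. G ((W \<circ> r) k) ((xk \<circ> r) k)) \<longlonglongrightarrow> G Ws l" by (rule Gcont[OF Wr r(2)])
    show "(\<lambda>k. G ((W \<circ> r) k) z) \<longlonglongrightarrow> G Ws z" by (rule Gcont[OF Wr tendsto_const])
    show "\<exists>N. \<forall>n\<ge>N. G ((W \<circ> r) n) ((xk \<circ> r) n) \<le> G ((W \<circ> r) n) z"
      using xk_min z unfolding is_min_on_def Jk by auto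
  qed
  then have "is_min_on (J_fun K Dh Dv lam \<eta> p \<Psi>s y\<delta>) nonneg_set l"
    unfolding is_min_on_def Js using lnn by auto
  then have "l = xs" by (rule xs_uniq)
  with r show ?thesis by blast
qed

end
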